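(* Every symmetric pseudo-Boolean function $f:\{0,1\}^n\to\mathbb{R}$, with $f(x)=k_{|x|}$, can be represented uniquely in the form \[ f(x)=\sum_{i=0}^{n}\alpha_i\,\min\Bigl(0,\; i-\tfrac12-\sum_{r=1}^n x_r\Bigr)\quad\text{for all }x\in\{0,1\}^n, \] where $\alpha_i=-8\sum_{j=0}^{i}(-1)^{i-j}k_j-2k_{i-1}+6k_i$ for $i=0,1,\ldots,n$, with the convention $k_{-1}=0$.
   Context: A pseudo-Boolean function is a map $\{0,1\}^n\to\mathbb{R}$; it is symmetric if there are reals $k_0,\ldots,k_n$ with $f(x)=k_l$ whenever the Hamming weight $|x|=\sum_j x_j$ equals $l$. *)

theory Defs
  imports Complex_Main "HOL-Library.FuncSet"
begin

abbreviation cube :: "nat \<Rightarrow> (nat \<Rightarrow> nat) set" where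
  "cube n \<equiv> {1..n} \<rightarrow>\<^sub>E {0,1}"

definition hweight :: "nat \<Rightarrow> (nat \<Rightarrow> nat) \<Rightarrow> nat" where
  "hweight n x = (\<Sum>r=1..n. x r)"

definition kprev :: "(nat \<Rightarrow> real) \<Rightarrow> nat \<Rightarrow> real" where
  "kprev k i = (if i = 0 then 0 else k (i - 1))"

definition alpha :: "(nat \<Rightarrow> real) \<Rightarrow> nat \<Rightarrow> real" where
  "alpha k i = -8 * (\<Sum>j=0..i. (-1) ^ (i - j) * k j) - 2 * kprev k i + 6 * k i"

end

theory Submission
  imports Defs
begin

definition AA :: "(nat \<Rightarrow> real) \<Rightarrow> nat \<Rightarrow> real" where
  "AA k w = (\<Sum>j=0..w. (-1) ^ (w - j) * k j)"

lemma AA_Suc: "AA k (Suc w) = k (Suc w) - AA k w"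
proof -
  have "(\<Sum>j=0..w. (-1::real) ^ (Suc w - j) * k j) = (\<Sum>j=0..w. - ((-1) ^ (w - j) * k j))"
    by (rule sum.cong) (auto simp: Suc_diff_le)
  thus ?thesis unfolding AA_def by (simp add: sum_negf)
qed

lemma alpha_Suc: "alpha k (Suc w) = -2 * k (Suc w) + 8 * AA k w - 2 * k w"
  using AA_Suc[of k w] unfolding alpha_def AA_def[symmetric] kprev_def by simp

lemma main: "(\<Sum>i=0..w. alpha k i) = 2 * k w - 4 * AA k w \<and>
   (\<Sum>i=0..w. alpha k i * (real i - 1/2 - real w)) = k w"
proof (induction w)
  case 0
  then show ?case by (simp add: alpha_def AA_def kprev_def)
next
  case (Suc w)
  have e: "(\<Sum>i=0..w. alpha k i * (real i - 1/2 - real (Suc w)))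
     = (\<Sum>i=0..w. alpha k i * (real i - 1/2 - real w)) - (\<Sum>i=0..w. alpha k i)"
    by (simp add: sum_subtractf[symmetric] algebra_simps)
  show ?case using Suc e AA_Suc[of k w] alpha_Suc[of k w]
    by (simp add: algebra_simps)
qed

lemma red:
  assumes "w \<le> n"
  shows "(\<Sum>i=0..n. c i * min 0 (real i - 1/2 - real w)) = (\<Sum>i=0..w. c i * (real i - 1/2 - real w))"
proof -
  have "(\<Sum>i=0..n. c i * min 0 (real i - 1/2 - real w)) = (\<Sum>i=0..w. c i * min 0 (real i - 1/2 - real w))"
  proof (rule sum.mono_neutral_right)
    show "finite {0..n}" by simp
    show "{0..w} \<subseteq> {0..n}" using assms by auto
    show "\<forall>i\<in>{0..n} - {0..w}. c i * min 0 (real i - 1/2 - real w) = 0"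
    proof
      fix i assume "i \<in> {0..n} - {0..w}"
      then have "real i \<ge> real w + 1" by auto
      then have "min 0 (real i - 1/2 - real w) = 0" by simp
      then show "c i * min 0 (real i - 1/2 - real w) = 0" by simp
    qed
  qed
  also have "\<dots> = (\<Sum>i=0..w. c i * (real i - 1/2 - real w))"
    by (rule sum.cong) auto
  finally show ?thesis .
qed

definition pt :: "nat \<Rightarrow> nat \<Rightarrow> nat \<Rightarrow> nat" where
  "pt n w = (\<lambda>r. if r \<in> {1..n} then (if r \<le> w then 1 else 0) else undefined)"

lemma pt_cube: "pt n w \<in> cube n"
  by (auto simp: pt_def split: if_splits)

lemma pt_weight: assumes a: "w \<le> n" shows "hweight n (pt n w) = w"
proof -
  have "hweight n (pt n w) = (\<Sum>r=1..n. (if r \<le> w then 1 else 0::nat))"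
    unfolding hweight_def pt_def by (intro sum.cong) auto
  also have "\<dots> = (\<Sum>r=1..w. 1)"
    using a by (intro sum.mono_neutral_cong_right) auto
  finally show ?thesis by simp
qed

lemma weight_le: assumes "x \<in> cube n" shows "hweight n x \<le> n"
proof -
  have "hweight n x \<le> (\<Sum>r=1..n. 1)" unfolding hweight_def
    using assms by (intro sum_mono) (auto simp: PiE_def Pi_def)
  thus ?thesis by simp
qed

theorem corollary1:
  fixes n :: nat and k :: "nat \<Rightarrow> real" and f :: "(nat \<Rightarrow> nat) \<Rightarrow> real"
  assumes sym: "\<forall>x \<in> cube n. f x = k (hweight n x)"
  shows "(\<forall>x \<in> cube n. f x =
            (\<Sum>i=0..n. alpha k i * min 0 (real i - 1/2 - real (hweight n x))))
       \<and> (\<forall>a :: nat \<Rightarrow> real.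
            (\<forall>x \<in> cube n. f x = (\<Sum>i=0..n. a i * min 0 (real i - 1/2 - real (hweight n x))))
            \<longrightarrow> (\<forall>i \<le> n. a i = alpha k i))"
proof (intro conjI allI impI ballI)
  fix x assume x: "x \<in> cube n"
  show "f x = (\<Sum>i=0..n. alpha k i * min 0 (real i - 1/2 - real (hweight n x)))"
    using sym x red[OF weight_le[OF x]] main[of k "hweight n x"] by simp
next
  fix a :: "nat \<Rightarrow> real" and i
  assume H: "\<forall>x \<in> cube n. f x = (\<Sum>i=0..n. a i * min 0 (real i - 1/2 - real (hweight n x)))"
  assume "i \<le> n"
  then show "a i = alpha k i"
  proof (induction i rule: less_induct)
    case (less w)
    have "k w = (\<Sum>i=0..w. a i * (real i - 1/2 - real w))"
      using H[rule_format, OF pt_cube[of n w]] sym[rule_format, OF pt_cube[of n w]]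
        pt_weight[OF less.prems] red[OF less.prems] by simp
    also have "\<dots> = (\<Sum>i<w. alpha k i * (real i - 1/2 - real w)) + a w * (- 1/2)"
    proof -
      have "(\<Sum>i=0..w. a i * (real i - 1/2 - real w)) = (\<Sum>i<w. a i * (real i - 1/2 - real w)) + a w * (real w - 1/2 - real w)"
        by (simp add: atLeast0AtMost lessThan_Suc_atMost[symmetric])
      moreover have "(\<Sum>i<w. a i * (real i - 1/2 - real w)) = (\<Sum>i<w. alpha k i * (real i - 1/2 - real w))"
        using less by (intro sum.cong) auto
      ultimately show ?thesis by simp
    qed
    finally have 1: "k w = (\<Sum>i<w. alpha k i * (real i - 1/2 - real w)) + a w * (- 1/2)" .
    have "k w = (\<Sum>i<w. alpha k i * (real i - 1/2 - real w)) + alpha k w * (- 1/2)"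
      using main[of k w] by (simp add: atLeast0AtMost lessThan_Suc_atMost[symmetric])
    with 1 show ?case by simp
  qed
qed

end
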